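(* Let $\mathbf{u}_j\in c_0$, $j\in\mathbb{N}_m$, $\mathcal{L}(\mathbf{x}):=[\langle\mathbf{u}_j,\mathbf{x}\rangle:j\in\mathbb{N}_m]$ for $\mathbf{x}\in\ell_1(\mathbb{N})$, and $\mathcal{L}^*(\mathbf{c}):=\sum_{j\in\mathbb{N}_m}c_j\mathbf{u}_j$. Let $\mathbf{y}_0\in\mathbb{R}^m$, let $\mathcal{Q}_{\mathbf{y}_0}:\mathbb{R}^m\to\mathbb{R}_+$ be convex, and $\lambda>0$. Then $\mathbf{x}_0\in\ell_1(\mathbb{N})$ is a solution of $$\inf\{\mathcal{Q}_{\mathbf{y}_0}(\mathcal{L}(\mathbf{x}))+\lambda\|\mathbf{x}\|_1:\mathbf{x}\in\ell_1(\mathbb{N})\}$$ if and only if there exists $\hat{\mathbf{c}}\in\mathbb{R}^m$ such that $$\hat{\mathbf{c}}=\mathrm{prox}_{\mathcal{Q}_{\mathbf{y}_0}^*}(\hat{\mathbf{c}}+\mathcal{L}(\mathbf{x}_0))\quad\text{and}\quad \mathbf{x}_0=\mathrm{prox}_{\|\cdot\|_1,\ell_2(\mathbb{N}),\mathcal{T}_0}\Big(\mathbf{x}_0-\frac1\lambda\mathcal{S}\mathcal{L}^*(\hat{\mathbf{c}})\Big).$$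
   Context: $\mathbb{R}_+:=[0,+\infty)$; $\mathbb{N}_m:=\{1,\dots,m\}$; $c_0$ is the space of real sequences tending to $0$, $\|\mathbf{u}\|_\infty=\sup_j|u_j|$; $\langle\mathbf{u},\mathbf{x}\rangle:=\sum_ju_jx_j$. $\mathcal{Q}_{\mathbf{y}_0}^*(\mathbf{c}):=\sup\{\langle\mathbf{a},\mathbf{c}\rangle_{\mathbb{R}^m}-\mathcal{Q}_{\mathbf{y}_0}(\mathbf{a}):\mathbf{a}\in\mathbb{R}^m\}$ is the convex conjugate. For a convex $\psi:\mathbb{R}^m\to\mathbb{R}\cup\{+\infty\}$, $\mathrm{prox}_\psi(\mathbf{a}):=\arg\min\{\frac12\|\mathbf{a}-\mathbf{c}\|_{\mathbb{R}^m}^2+\psi(\mathbf{c}):\mathbf{c}\in\mathbb{R}^m\}$. $\mathcal{T}_0:\ell_1(\mathbb{N})\to\ell_2(\mathbb{N})$ is the inclusion and $\mathrm{prox}_{\|\cdot\|_1,\ell_2(\mathbb{N}),\mathcal{T}_0}(\mathbf{x}):=\arg\min\{\frac12\|\mathbf{x}-\mathbf{z}\|_2^2+\|\mathbf{z}\|_1:\mathbf{z}\in\ell_1(\mathbb{N})\}=(\max\{|x_j|-1,0\}\mathrm{sign}(x_j):j\in\mathbb{N})$. For $\mathbf{u}\in c_0$, $\mathbb{N}(\mathbf{u}):=\{j:|u_j|=\|\mathbf{u}\|_\infty\}$ and the truncation $\mathcal{S}(\mathbf{u})$ is the sequence equal to $u_j$ for $j\in\mathbb{N}(\mathbf{u})$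 and $0$ otherwise. *)

theory Defs
  imports "HOL-Analysis.Analysis"
begin

text \<open>Real sequences indexed by nat (the paper's index set N = {1,2,...} is relabelled
  to start at 0). R^m is rendered as real^'m with an arbitrary finite index type 'm.\<close>

definition in_l1 :: "(nat \<Rightarrow> real) \<Rightarrow> bool" where
  "in_l1 x \<longleftrightarrow> summable (\<lambda>j. \<bar>x j\<bar>)"

definition l1_norm :: "(nat \<Rightarrow> real) \<Rightarrow> real" where
  "l1_norm x = (\<Sum>j. \<bar>x j\<bar>)"

definition in_c0 :: "(nat \<Rightarrow> real) \<Rightarrow> bool" where
  "in_c0 u \<longleftrightarrow> u \<longlonglongrightarrow> 0"

definition seq_inner :: "(nat \<Rightarrow> real) \<Rightarrow> (nat \<Rightarrow> real) \<Rightarrow> real" where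
  "seq_inner u x = (\<Sum>j. u j * x j)"

definition sup_norm :: "(nat \<Rightarrow> real) \<Rightarrow> real" where
  "sup_norm u = (SUP j. \<bar>u j\<bar>)"

definition trunc_S :: "(nat \<Rightarrow> real) \<Rightarrow> (nat \<Rightarrow> real)" where
  "trunc_S u = (\<lambda>j. if \<bar>u j\<bar> = sup_norm u then u j else 0)"

definition opL :: "('m::finite \<Rightarrow> nat \<Rightarrow> real) \<Rightarrow> (nat \<Rightarrow> real) \<Rightarrow> real^'m" where
  "opL u x = (\<chi> i. seq_inner (u i) x)"

definition opL_adj :: "('m::finite \<Rightarrow> nat \<Rightarrow> real) \<Rightarrow> real^'m \<Rightarrow> (nat \<Rightarrow> real)" where
  "opL_adj u c = (\<lambda>k. \<Sum>i\<in>UNIV. c $ i * u i k)"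

definition conj_fun :: "(real^'m::finite \<Rightarrow> real) \<Rightarrow> real^'m \<Rightarrow> ereal" where
  "conj_fun Q c = (SUP a. ereal (a \<bullet> c - Q a))"

definition prox :: "(real^'m::finite \<Rightarrow> ereal) \<Rightarrow> real^'m \<Rightarrow> real^'m" where
  "prox \<psi> a = (THE c. \<forall>c'. ereal (1/2 * (norm (a - c))\<^sup>2) + \<psi> c
                          \<le> ereal (1/2 * (norm (a - c'))\<^sup>2) + \<psi> c')"

text \<open>prox of the l1 norm w.r.t. l2 and the inclusion T0, via the explicit formula
  given in the paper (soft thresholding).\<close>
definition prox_l1 :: "(nat \<Rightarrow> real) \<Rightarrow> (nat \<Rightarrow> real)" where
  "prox_l1 x = (\<lambda>j. max (\<bar>x j\<bar> - 1) 0 * sgn (x j))"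

end

theory Submission
  imports Defs
begin


definition subgrad :: "(real^'m::finite \<Rightarrow> real) \<Rightarrow> real^'m \<Rightarrow> real^'m \<Rightarrow> bool" where
  "subgrad Q y c \<longleftrightarrow> (\<forall>z. Q z \<ge> Q y + c \<bullet> (z - y))"

lemma sq_ident:
  fixes c y c' :: "real^'m::finite"
  shows "1/2 * (norm (c + y - c'))\<^sup>2 + y \<bullet> c' = 1/2 * (norm (c + y - c))\<^sup>2 + c \<bullet> y + 1/2 * (norm (c - c'))\<^sup>2"
  by (simp add: power2_norm_eq_inner inner_add_left inner_add_right inner_diff_left inner_diff_right inner_commute algebra_simps)

lemma norm_sq_lin:
  fixes x d :: "'a::real_inner"
  shows "(norm (x - t *\<^sub>R d))\<^sup>2 = (norm x)\<^sup>2 - 2 * t * (x \<bullet> d) + t\<^sup>2 * (norm d)\<^sup>2"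
  unfolding power2_norm_eq_inner
  by (simp add: inner_diff_left inner_diff_right inner_commute power2_eq_square algebra_simps)

lemma prox_subgrad:
  assumes sg: "subgrad Q y c"
  shows "prox (conj_fun Q) (c + y) = c"
proof -
  have conj_at: "conj_fun Q c = ereal (c \<bullet> y - Q y)"
    unfolding conj_fun_def
  proof (rule antisym)
    show "(SUP a. ereal (a \<bullet> c - Q a)) \<le> ereal (c \<bullet> y - Q y)"
    proof (rule SUP_least)
      fix a
      have "Q a \<ge> Q y + c \<bullet> (a - y)" using sg unfolding subgrad_def by blast
      then show "ereal (a \<bullet> c - Q a) \<le> ereal (c \<bullet> y - Q y)"
        by (simp add: inner_diff_right inner_commute)
    qed
    show "ereal (c \<bullet> y - Q y) \<le> (SUP a. ereal (a \<bullet> c - Q a))"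
      by (rule SUP_upper2[of y]) (auto simp: inner_commute)
  qed
  have conj_ge: "conj_fun Q c' \<ge> ereal (y \<bullet> c' - Q y)" for c'
    unfolding conj_fun_def by (rule SUP_upper2[of y]) auto
  define f where "f c' = ereal (1/2 * (norm (c + y - c'))\<^sup>2) + conj_fun Q c'" for c'
  have fc: "f c = ereal (1/2 * (norm (c + y - c))\<^sup>2 + c \<bullet> y - Q y)"
    unfolding f_def conj_at by simp
  have key: "ereal (1/2 * (norm (c + y - c))\<^sup>2 + c \<bullet> y - Q y + 1/2 * (norm (c - c'))\<^sup>2) \<le> f c'" for c'
  proof -
    have A: "ereal (1/2 * (norm (c + y - c'))\<^sup>2) + ereal (y \<bullet> c' - Q y) \<le> f c'"
      unfolding f_def by (intro add_left_mono conj_ge)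
    have B: "ereal (1/2 * (norm (c + y - c'))\<^sup>2) + ereal (y \<bullet> c' - Q y)
       = ereal (1/2 * (norm (c + y - c))\<^sup>2 + c \<bullet> y - Q y + 1/2 * (norm (c - c'))\<^sup>2)"
    proof -
      have "1/2 * (norm (c + y - c'))\<^sup>2 + (y \<bullet> c' - Q y) = 1/2 * (norm (c + y - c))\<^sup>2 + c \<bullet> y - Q y + 1/2 * (norm (c - c'))\<^sup>2"
        using sq_ident[of c y c'] by linarith
      then show ?thesis by (simp only: plus_ereal.simps)
    qed
    show ?thesis using A unfolding B .
  qed
  have minc: "f c \<le> f c'" for c'
  proof -
    have "f c \<le> ereal (1/2 * (norm (c + y - c))\<^sup>2 + c \<bullet> y - Q y + 1/2 * (norm (c - c'))\<^sup>2)"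
      unfolding fc by simp
    then show ?thesis using key[of c'] by (rule order_trans)
  qed
  show ?thesis
    unfolding prox_def
  proof (rule the_equality)
    show "\<forall>c'. ereal (1/2 * (norm (c + y - c))\<^sup>2) + conj_fun Q c \<le> ereal (1/2 * (norm (c + y - c'))\<^sup>2) + conj_fun Q c'"
      using minc unfolding f_def by blast
  next
    fix c''
    assume "\<forall>c'. ereal (1/2 * (norm (c + y - c''))\<^sup>2) + conj_fun Q c'' \<le> ereal (1/2 * (norm (c + y - c'))\<^sup>2) + conj_fun Q c'"
    then have "f c'' \<le> f c" unfolding f_def by blast
    from order_trans[OF key[of c''] this] have
      "ereal (1/2 * (norm (c + y - c))\<^sup>2 + c \<bullet> y - Q y + 1/2 * (norm (c - c''))\<^sup>2) \<le> ereal (1/2 * (norm (c + y - c))\<^sup>2 + c \<bullet> y - Q y)"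
      unfolding fc .
    then have "1/2 * (norm (c + y - c))\<^sup>2 + c \<bullet> y - Q y + 1/2 * (norm (c - c''))\<^sup>2 \<le> 1/2 * (norm (c + y - c))\<^sup>2 + c \<bullet> y - Q y"
      by (simp only: ereal_less_eq)
    then have "1/2 * (norm (c - c''))\<^sup>2 \<le> 0" by linarith
    then show "c'' = c" by simp
  qed
qed

lemma exists_decomp:
  fixes Q :: "real^'m::finite \<Rightarrow> real"
  assumes cv: "convex_on UNIV Q" and nn: "\<And>a. Q a \<ge> 0"
  shows "\<exists>p. subgrad Q p (a - p)"
proof -
  define h where "h z = 1/2 * (norm (a - z))\<^sup>2 + Q z" for z
  have contQ: "continuous_on UNIV Q" using convex_on_continuous[OF open_UNIV cv] .
  have conth: "continuous_on UNIV h" unfolding h_def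
    by (intro continuous_intros contQ)
  define R where "R = sqrt (2 * Q a) + 1"
  have Rpos: "R > 0" proof -
    have "sqrt (2 * Q a) \<ge> 0" using nn[of a] by simp
    then show ?thesis unfolding R_def by linarith
  qed
  have "\<exists>p\<in>cball a R. \<forall>z\<in>cball a R. h p \<le> h z"
    using Rpos by (intro continuous_attains_inf) (auto intro: continuous_on_subset[OF conth])
  then obtain p where pin: "p \<in> cball a R" and pmin: "\<And>z. z \<in> cball a R \<Longrightarrow> h p \<le> h z" by blast
  have hp: "h p \<le> h z" for z
  proof (cases "z \<in> cball a R")
    case True then show ?thesis using pmin by blast
  next
    case False
    then have "dist a z > R" by simp
    then have d: "norm (a - z) > R" by (simp add: dist_norm)
    have "R\<^sup>2 > 2 * Q a"
    proof -
      have "sqrt (2 * Q a) < R" unfolding R_def by simp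
      then have "(sqrt (2 * Q a))\<^sup>2 < R\<^sup>2"
        using nn[of a] by (intro power_strict_mono) (auto)
      then show ?thesis using nn[of a] by simp
    qed
    moreover have "R\<^sup>2 < (norm (a - z))\<^sup>2"
      using d Rpos by (intro power_strict_mono) auto
    ultimately have "h z > Q a" unfolding h_def using nn[of z] by simp
    moreover have "h p \<le> h a" using pmin[of a] Rpos by simp
    moreover have "h a = Q a" by (simp add: h_def)
    ultimately show ?thesis by simp
  qed
  have "subgrad Q p (a - p)"
    unfolding subgrad_def
  proof (rule allI, rule ccontr)
    fix z
    assume "\<not> Q p + (a - p) \<bullet> (z - p) \<le> Q z"
    define d where "d = z - p"
    define \<delta> where "\<delta> = Q p + (a - p) \<bullet> d - Q z"
    have dpos: "\<delta> > 0" using \<open>\<not> _\<close> by (simp add: \<delta>_def d_def)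
    have ineq: "Q p \<le> Q z - (a - p) \<bullet> d + t/2 * (norm d)\<^sup>2" if t: "0 < t" "t \<le> 1" for t
    proof -
      have c1: "Q ((1 - t) *\<^sub>R p + t *\<^sub>R z) \<le> (1 - t) * Q p + t * Q z"
        using convex_onD[OF cv] t by simp
      have eq: "(1 - t) *\<^sub>R p + t *\<^sub>R z = p + t *\<^sub>R d" by (simp add: d_def algebra_simps)
      have "h p \<le> h (p + t *\<^sub>R d)" by (rule hp)
      moreover have "(norm (a - (p + t *\<^sub>R d)))\<^sup>2 = (norm (a - p))\<^sup>2 - 2 * t * ((a - p) \<bullet> d) + t\<^sup>2 * (norm d)\<^sup>2"
        using norm_sq_lin[of "a - p" t d] by (simp add: algebra_simps)
      ultimately have "Q p \<le> - t * ((a - p) \<bullet> d) + t\<^sup>2/2 * (norm d)\<^sup>2 + Q (p + t *\<^sub>R d)"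
        unfolding h_def by (simp add: algebra_simps)
      with c1 eq have "t * Q p \<le> t * (Q z - (a - p) \<bullet> d + t/2 * (norm d)\<^sup>2)"
        by (simp add: algebra_simps power2_eq_square)
      then show ?thesis using t by simp
    qed
    show False
    proof (cases "d = 0")
      case True
      then show ?thesis using dpos by (simp add: \<delta>_def d_def)
    next
      case False
      then have nd: "(norm d)\<^sup>2 > 0" by simp
      define t where "t = min 1 (\<delta> / (norm d)\<^sup>2)"
      have t0: "0 < t" "t \<le> 1" using dpos nd by (auto simp: t_def)
      have "t * (norm d)\<^sup>2 \<le> \<delta>" using nd
        by (simp add: t_def min_def field_simps)
      with ineq[OF t0] dpos show False unfolding \<delta>_def by linarith
    qed
  qed
  then show ?thesis by blast
qed

lemma prox_iff_subgrad:
  fixes Q :: "real^'m::finite \<Rightarrow> real"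
  assumes cv: "convex_on UNIV Q" and nn: "\<And>a. Q a \<ge> 0"
  shows "c = prox (conj_fun Q) (c + y) \<longleftrightarrow> subgrad Q y c"
proof
  assume h: "c = prox (conj_fun Q) (c + y)"
  obtain p where p: "subgrad Q p ((c + y) - p)" using exists_decomp[OF cv nn] by blast
  have "prox (conj_fun Q) ((c + y - p) + p) = c + y - p" by (rule prox_subgrad[OF p])
  then have "c = c + y - p" using h by simp
  then have "p = y" by (simp add: algebra_simps)
  then show "subgrad Q y c" using p by simp
next
  assume "subgrad Q y c"
  then show "c = prox (conj_fun Q) (c + y)" using prox_subgrad by metis
qed



lemma c0_bounded:
  assumes "in_c0 w" shows "\<exists>B>0. \<forall>j. \<bar>w j\<bar> \<le> B"
proof -
  have "Bseq w" using assms unfolding in_c0_def by (intro convergent_imp_Bseq) (auto simp: convergent_def)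
  then show ?thesis by (auto elim!: BseqE)
qed

lemma summable_mul:
  assumes "in_c0 w" "in_l1 x" shows "summable (\<lambda>j. w j * x j)"
proof -
  obtain B where B: "B > 0" "\<And>j. \<bar>w j\<bar> \<le> B" using c0_bounded[OF assms(1)] by blast
  show ?thesis
  proof (rule summable_comparison_test)
    show "\<exists>N. \<forall>n\<ge>N. norm (w n * x n) \<le> B * \<bar>x n\<bar>"
      using B by (auto simp: abs_mult intro!: mult_right_mono)
    show "summable (\<lambda>n. B * \<bar>x n\<bar>)" using assms(2) unfolding in_l1_def by (rule summable_mult)
  qed
qed

lemma adj_c0:
  assumes "\<And>i. in_c0 (u i)" shows "in_c0 (opL_adj u c)"
  unfolding in_c0_def opL_adj_def
  by (rule tendsto_null_sum) (use assms in \<open>auto simp: in_c0_def intro: tendsto_mult_right_zero\<close>)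

lemma adj_inner:
  fixes u :: "'m::finite \<Rightarrow> nat \<Rightarrow> real"
  assumes u: "\<And>i. in_c0 (u i)" and x: "in_l1 x"
  shows "c \<bullet> opL u x = seq_inner (opL_adj u c) x"
proof -
  have s: "summable (\<lambda>j. u i j * x j)" for i using summable_mul[OF u x] .
  have "c \<bullet> opL u x = (\<Sum>i\<in>UNIV. c $ i * (\<Sum>j. u i j * x j))"
    by (simp add: inner_vec_def opL_def seq_inner_def)
  also have "\<dots> = (\<Sum>i\<in>UNIV. (\<Sum>j. c $ i * (u i j * x j)))"
    using s by (simp add: suminf_mult)
  also have "\<dots> = (\<Sum>j. \<Sum>i\<in>UNIV. c $ i * (u i j * x j))"
    using s by (intro suminf_sum[symmetric] summable_mult) 
  also have "\<dots> = seq_inner (opL_adj u c) x"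
    by (simp add: seq_inner_def opL_adj_def sum_distrib_right mult.assoc)
  finally show ?thesis .
qed

lemma c0_max:
  assumes "in_c0 w" shows "\<exists>k. \<forall>j. \<bar>w j\<bar> \<le> \<bar>w k\<bar>"
proof (cases "\<forall>j. w j = 0")
  case True then show ?thesis by auto
next
  case False
  then obtain j0 where j0: "w j0 \<noteq> 0" by blast
  have "\<forall>\<^sub>F j in sequentially. dist (w j) 0 < \<bar>w j0\<bar>"
    using assms j0 unfolding in_c0_def by (auto simp: tendsto_iff)
  then obtain N0 where N0: "\<And>j. j \<ge> N0 \<Longrightarrow> \<bar>w j\<bar> < \<bar>w j0\<bar>"
    by (auto simp: eventually_sequentially)
  define N where "N = max N0 j0"
  define M where "M = Max ((\<lambda>j. \<bar>w j\<bar>) ` {..N})"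
  have "M \<in> (\<lambda>j. \<bar>w j\<bar>) ` {..N}" unfolding M_def by (intro Max_in) auto
  then obtain k where k: "M = \<bar>w k\<bar>" by auto
  have le: "j \<le> N \<Longrightarrow> \<bar>w j\<bar> \<le> M" for j unfolding M_def by (intro Max_ge) auto
  have "\<bar>w j\<bar> \<le> \<bar>w k\<bar>" for j
  proof (cases "j \<le> N")
    case True then show ?thesis using le k by simp
  next
    case False
    then have "\<bar>w j\<bar> < \<bar>w j0\<bar>" using N0 by (simp add: N_def)
    moreover have "\<bar>w j0\<bar> \<le> M" using le[of j0] by (simp add: N_def)
    ultimately show ?thesis using k by simp
  qed
  then show ?thesis by blast
qed

lemma soft_comp:
  fixes t s :: real
  shows "t = max (\<bar>t - s\<bar> - 1) 0 * sgn (t - s) \<longleftrightarrow> ((t \<noteq> 0 \<longrightarrow> s = - sgn t) \<and> \<bar>s\<bar> \<le> 1)"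
proof (cases "t - s > 0")
  case True
  then show ?thesis by (cases "t - s > 1") (auto simp: sgn_if max_def)
next
  case False
  then show ?thesis by (cases "t - s < -1"; cases "t - s = 0") (auto simp: sgn_if max_def)
qed

lemma trunc_char:
  assumes w: "in_c0 w" and lam: "lam > 0"
  shows "(x0 = prox_l1 (\<lambda>j. x0 j - (1 / lam) * trunc_S w j)) \<longleftrightarrow>
         (\<forall>j. \<bar>w j\<bar> \<le> lam \<and> (x0 j \<noteq> 0 \<longrightarrow> w j = - lam * sgn (x0 j)))"
proof -
  obtain k where k: "\<And>j. \<bar>w j\<bar> \<le> \<bar>w k\<bar>" using c0_max[OF w] by blast
  have sn: "sup_norm w = \<bar>w k\<bar>" unfolding sup_norm_def
    by (rule cSup_eq_maximum) (use k in auto)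
  define v where "v j = (1 / lam) * trunc_S w j" for j
  have "(x0 = prox_l1 (\<lambda>j. x0 j - (1 / lam) * trunc_S w j)) \<longleftrightarrow>
        (\<forall>j. x0 j = max (\<bar>x0 j - v j\<bar> - 1) 0 * sgn (x0 j - v j))"
    by (simp add: prox_l1_def fun_eq_iff v_def)
  also have "\<dots> \<longleftrightarrow> (\<forall>j. (x0 j \<noteq> 0 \<longrightarrow> v j = - sgn (x0 j)) \<and> \<bar>v j\<bar> \<le> 1)"
    using soft_comp by blast
  also have "\<dots> \<longleftrightarrow> (\<forall>j. \<bar>w j\<bar> \<le> lam \<and> (x0 j \<noteq> 0 \<longrightarrow> w j = - lam * sgn (x0 j)))"
  proof
    assume H: "\<forall>j. (x0 j \<noteq> 0 \<longrightarrow> v j = - sgn (x0 j)) \<and> \<bar>v j\<bar> \<le> 1"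
    have "\<bar>v k\<bar> \<le> 1" using H by blast
    then have wk: "\<bar>w k\<bar> \<le> lam" using lam by (simp add: v_def trunc_S_def sn abs_mult field_simps)
    show "\<forall>j. \<bar>w j\<bar> \<le> lam \<and> (x0 j \<noteq> 0 \<longrightarrow> w j = - lam * sgn (x0 j))"
    proof (intro allI conjI impI)
      fix j
      show "\<bar>w j\<bar> \<le> lam" using k[of j] wk by simp
      assume "x0 j \<noteq> 0"
      then have "v j = - sgn (x0 j)" using H by blast
      moreover have "sgn (x0 j) \<noteq> 0" using \<open>x0 j \<noteq> 0\<close> by (simp add: sgn_0_0)
      ultimately have "trunc_S w j \<noteq> 0" "v j * lam = trunc_S w j" using lam by (auto simp: v_def field_simps)
      then have "trunc_S w j = w j" by (auto simp: trunc_S_def split: if_splits)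
      then show "w j = - lam * sgn (x0 j)" using \<open>v j = - sgn (x0 j)\<close> \<open>v j * lam = trunc_S w j\<close>
        by (simp add: mult.commute)
    qed
  next
    assume H: "\<forall>j. \<bar>w j\<bar> \<le> lam \<and> (x0 j \<noteq> 0 \<longrightarrow> w j = - lam * sgn (x0 j))"
    show "\<forall>j. (x0 j \<noteq> 0 \<longrightarrow> v j = - sgn (x0 j)) \<and> \<bar>v j\<bar> \<le> 1"
    proof (intro allI conjI impI)
      fix j
      have "\<bar>trunc_S w j\<bar> \<le> \<bar>w j\<bar>" by (simp add: trunc_S_def)
      then have "\<bar>trunc_S w j\<bar> \<le> lam" using H by (meson order_trans)
      then show "\<bar>v j\<bar> \<le> 1" using lam by (simp add: v_def abs_mult field_simps)
      assume "x0 j \<noteq> 0"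
      then have wj: "w j = - lam * sgn (x0 j)" using H by blast
      then have "\<bar>w j\<bar> = lam" using lam \<open>x0 j \<noteq> 0\<close> by (simp add: abs_mult abs_sgn_eq)
      moreover have "\<bar>w k\<bar> \<le> lam" using H by blast
      ultimately have "\<bar>w j\<bar> = sup_norm w" using k[of j] sn by simp
      then have "trunc_S w j = w j" by (simp add: trunc_S_def)
      then show "v j = - sgn (x0 j)" using wj lam by (simp add: v_def)
    qed
  qed
  finally show ?thesis .
qed



lemma upd_sums:
  fixes f :: "nat \<Rightarrow> real"
  assumes "f sums a"
  shows "(\<lambda>n. f n + (if n = j then b else 0)) sums (a + b)"
proof -
  have "(\<lambda>n. if n = j then b else 0) sums b" using sums_single[of j "\<lambda>_. b"] by simp
  from sums_add[OF assms this] show ?thesis by simp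
qed

lemma ineq_iff_P:
  assumes w: "in_c0 w" and x0: "in_l1 x0" and lam: "lam > 0"
  shows "(\<forall>x. in_l1 x \<longrightarrow> lam * l1_norm x0 + seq_inner w x0 \<le> lam * l1_norm x + seq_inner w x)
     \<longleftrightarrow> (\<forall>j. \<bar>w j\<bar> \<le> lam \<and> (x0 j \<noteq> 0 \<longrightarrow> w j = - lam * sgn (x0 j)))"
proof
  assume H: "\<forall>x. in_l1 x \<longrightarrow> lam * l1_norm x0 + seq_inner w x0 \<le> lam * l1_norm x + seq_inner w x"
  show "\<forall>j. \<bar>w j\<bar> \<le> lam \<and> (x0 j \<noteq> 0 \<longrightarrow> w j = - lam * sgn (x0 j))"
  proof
    fix j
    define K where "K = lam * \<bar>x0 j\<bar> + w j * x0 j"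
    have key: "K \<le> lam * \<bar>s\<bar> + w j * s" for s
    proof -
      define x where "x = x0(j := s)"
      have a1: "(\<lambda>n. \<bar>x0 n\<bar>) sums l1_norm x0" using x0 unfolding in_l1_def l1_norm_def by (rule summable_sums)
      have "(\<lambda>n. \<bar>x0 n\<bar> + (if n = j then \<bar>s\<bar> - \<bar>x0 j\<bar> else 0)) sums (l1_norm x0 + (\<bar>s\<bar> - \<bar>x0 j\<bar>))"
        by (rule upd_sums[OF a1])
      moreover have "(\<lambda>n. \<bar>x0 n\<bar> + (if n = j then \<bar>s\<bar> - \<bar>x0 j\<bar> else 0)) = (\<lambda>n. \<bar>x n\<bar>)"
        by (auto simp: x_def fun_eq_iff)
      ultimately have a2: "(\<lambda>n. \<bar>x n\<bar>) sums (l1_norm x0 + (\<bar>s\<bar> - \<bar>x0 j\<bar>))" by simp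
      then have xl1: "in_l1 x" unfolding in_l1_def by (rule sums_summable)
      have nx: "l1_norm x = l1_norm x0 + (\<bar>s\<bar> - \<bar>x0 j\<bar>)" using sums_unique[OF a2] by (simp add: l1_norm_def)
      have b1: "(\<lambda>n. w n * x0 n) sums seq_inner w x0" unfolding seq_inner_def using summable_mul[OF w x0] by (rule summable_sums)
      have "(\<lambda>n. w n * x0 n + (if n = j then w j * (s - x0 j) else 0)) sums (seq_inner w x0 + w j * (s - x0 j))"
        by (rule upd_sums[OF b1])
      moreover have "(\<lambda>n. w n * x0 n + (if n = j then w j * (s - x0 j) else 0)) = (\<lambda>n. w n * x n)"
        by (auto simp: x_def fun_eq_iff algebra_simps)
      ultimately have b2: "(\<lambda>n. w n * x n) sums (seq_inner w x0 + w j * (s - x0 j))" by simp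
      have ix: "seq_inner w x = seq_inner w x0 + w j * (s - x0 j)" using sums_unique[OF b2] by (simp add: seq_inner_def)
      have "lam * l1_norm x0 + seq_inner w x0 \<le> lam * l1_norm x + seq_inner w x" using H xl1 by blast
      then show ?thesis unfolding nx ix K_def by (simp add: algebra_simps)
    qed
    have wl: "\<bar>w j\<bar> \<le> lam"
    proof (rule ccontr)
      assume "\<not> \<bar>w j\<bar> \<le> lam"
      then have g: "\<bar>w j\<bar> - lam > 0" by simp
      define T where "T = (\<bar>K\<bar> + 1) / (\<bar>w j\<bar> - lam)"
      have T0: "T \<ge> 0" using g by (simp add: T_def)
      have "K \<le> lam * \<bar>- sgn (w j) * T\<bar> + w j * (- sgn (w j) * T)" by (rule key)
      also have "\<dots> = (lam - \<bar>w j\<bar>) * T" using T0 g lam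
        by (cases "w j > 0") (auto simp: abs_mult sgn_if algebra_simps)
      also have "\<dots> = - (\<bar>K\<bar> + 1)" using g by (simp add: T_def field_simps)
      finally show False by simp
    qed
    have "K \<le> 0" using key[of 0] by simp
    moreover have "K \<ge> 0"
    proof -
      have "\<bar>w j * x0 j\<bar> \<le> lam * \<bar>x0 j\<bar>" using wl by (simp add: abs_mult mult_right_mono)
      then show ?thesis unfolding K_def by linarith
    qed
    ultimately have K0: "K = 0" by simp
    show "\<bar>w j\<bar> \<le> lam \<and> (x0 j \<noteq> 0 \<longrightarrow> w j = - lam * sgn (x0 j))"
    proof (intro conjI impI wl)
      assume nz: "x0 j \<noteq> 0"
      show "w j = - lam * sgn (x0 j)"
      proof (cases "x0 j > 0")
        case True
        then have "(lam + w j) * x0 j = 0" using K0 by (simp add: K_def algebra_simps)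
        then show ?thesis using True by simp
      next
        case False
        then have "x0 j < 0" using nz by simp
        then have "(w j - lam) * x0 j = 0" using K0 by (simp add: K_def algebra_simps)
        then show ?thesis using \<open>x0 j < 0\<close> by simp
      qed
    qed
  qed
next
  assume P: "\<forall>j. \<bar>w j\<bar> \<le> lam \<and> (x0 j \<noteq> 0 \<longrightarrow> w j = - lam * sgn (x0 j))"
  show "\<forall>x. in_l1 x \<longrightarrow> lam * l1_norm x0 + seq_inner w x0 \<le> lam * l1_norm x + seq_inner w x"
  proof (intro allI impI)
    fix x assume x: "in_l1 x"
    have e0: "w j * x0 j = - lam * \<bar>x0 j\<bar>" for j
    proof (cases "x0 j = 0")
      case True then show ?thesis by simp
    next
      case False
      then have "w j = - lam * sgn (x0 j)" using P by blast
      then show ?thesis by (simp add: abs_sgn mult.assoc mult.commute[of "sgn (x0 j)"] sgn_mult_abs)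
    qed
    have s0: "seq_inner w x0 = - lam * l1_norm x0"
      unfolding seq_inner_def l1_norm_def e0
      using x0 unfolding in_l1_def by (rule suminf_mult)
    have "(\<Sum>j. - lam * \<bar>x j\<bar>) \<le> seq_inner w x"
      unfolding seq_inner_def
    proof (rule suminf_le)
      fix n
      have "\<bar>w n * x n\<bar> \<le> lam * \<bar>x n\<bar>" using P by (simp add: abs_mult mult_right_mono)
      then show "- lam * \<bar>x n\<bar> \<le> w n * x n" by linarith
      show "summable (\<lambda>j. - lam * \<bar>x j\<bar>)" using x unfolding in_l1_def by (rule summable_mult)
      show "summable (\<lambda>j. w j * x j)" by (rule summable_mul[OF w x])
    qed
    moreover have "(\<Sum>j. - lam * \<bar>x j\<bar>) = - lam * l1_norm x"
      unfolding l1_norm_def using x unfolding in_l1_def by (rule suminf_mult)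
    ultimately show "lam * l1_norm x0 + seq_inner w x0 \<le> lam * l1_norm x + seq_inner w x"
      using s0 by simp
  qed
qed



lemma l1_comb:
  assumes x: "in_l1 x" and y: "in_l1 y" and a: "a \<ge> 0" and b: "b \<ge> 0"
  shows "in_l1 (\<lambda>j. a * x j + b * y j) \<and> l1_norm (\<lambda>j. a * x j + b * y j) \<le> a * l1_norm x + b * l1_norm y"
proof -
  have sx: "summable (\<lambda>j. a * \<bar>x j\<bar>)" using x unfolding in_l1_def by (rule summable_mult)
  have sy: "summable (\<lambda>j. b * \<bar>y j\<bar>)" using y unfolding in_l1_def by (rule summable_mult)
  have sxy: "summable (\<lambda>j. a * \<bar>x j\<bar> + b * \<bar>y j\<bar>)" using summable_add[OF sx sy] .
  have le: "\<bar>a * x j + b * y j\<bar> \<le> a * \<bar>x j\<bar> + b * \<bar>y j\<bar>" for j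
    using abs_triangle_ineq[of "a * x j" "b * y j"] a b by (simp add: abs_mult)
  have s: "summable (\<lambda>j. \<bar>a * x j + b * y j\<bar>)"
  proof (rule summable_comparison_test[OF _ sxy])
    show "\<exists>N. \<forall>n\<ge>N. norm \<bar>a * x n + b * y n\<bar> \<le> a * \<bar>x n\<bar> + b * \<bar>y n\<bar>"
      using le by simp
  qed
  have "l1_norm (\<lambda>j. a * x j + b * y j) \<le> (\<Sum>j. a * \<bar>x j\<bar> + b * \<bar>y j\<bar>)"
    unfolding l1_norm_def by (rule suminf_le[OF le s sxy])
  also have "\<dots> = a * l1_norm x + b * l1_norm y"
    unfolding l1_norm_def
  proof -
    have "(\<Sum>j. a * \<bar>x j\<bar> + b * \<bar>y j\<bar>) = (\<Sum>j. a * \<bar>x j\<bar>) + (\<Sum>j. b * \<bar>y j\<bar>)"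
      by (rule suminf_add[OF sx sy, symmetric])
    also have "(\<Sum>j. a * \<bar>x j\<bar>) = a * (\<Sum>j. \<bar>x j\<bar>)" using x unfolding in_l1_def by (rule suminf_mult)
    also have "(\<Sum>j. b * \<bar>y j\<bar>) = b * (\<Sum>j. \<bar>y j\<bar>)" using y unfolding in_l1_def by (rule suminf_mult)
    finally show "(\<Sum>j. a * \<bar>x j\<bar> + b * \<bar>y j\<bar>) = a * (\<Sum>j. \<bar>x j\<bar>) + b * (\<Sum>j. \<bar>y j\<bar>)" .
  qed
  finally have "l1_norm (\<lambda>j. a * x j + b * y j) \<le> a * l1_norm x + b * l1_norm y" .
  moreover have "in_l1 (\<lambda>j. a * x j + b * y j)" using s unfolding in_l1_def .
  ultimately show ?thesis by blast
qed

lemma opL_comb: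
  fixes u :: "'m::finite \<Rightarrow> nat \<Rightarrow> real"
  assumes u: "\<And>i. in_c0 (u i)" and x: "in_l1 x" and y: "in_l1 y"
  shows "opL u (\<lambda>j. a * x j + b * y j) = a *\<^sub>R opL u x + b *\<^sub>R opL u y"
proof -
  have "seq_inner (u i) (\<lambda>j. a * x j + b * y j) = a * seq_inner (u i) x + b * seq_inner (u i) y" for i
  proof -
    have sx: "summable (\<lambda>j. a * (u i j * x j))" using summable_mul[OF u x] by (rule summable_mult)
    have sy: "summable (\<lambda>j. b * (u i j * y j))" using summable_mul[OF u y] by (rule summable_mult)
    have "seq_inner (u i) (\<lambda>j. a * x j + b * y j) = (\<Sum>j. a * (u i j * x j) + b * (u i j * y j))"
      unfolding seq_inner_def by (simp add: algebra_simps)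
    also have "\<dots> = (\<Sum>j. a * (u i j * x j)) + (\<Sum>j. b * (u i j * y j))" by (rule suminf_add[OF sx sy, symmetric])
    also have "\<dots> = a * seq_inner (u i) x + b * seq_inner (u i) y"
      unfolding seq_inner_def using summable_mul[OF u x] summable_mul[OF u y] by (simp add: suminf_mult)
    finally show ?thesis .
  qed
  then show ?thesis by (simp add: opL_def vec_eq_iff)
qed

lemma necessity:
  fixes u :: "'m::finite \<Rightarrow> nat \<Rightarrow> real" and Q :: "real^'m \<Rightarrow> real"
  assumes u: "\<And>i. in_c0 (u i)" and cv: "convex_on UNIV Q" and lam: "lam > 0" and x0: "in_l1 x0"
    and mn: "\<forall>x. in_l1 x \<longrightarrow> Q (opL u x0) + lam * l1_norm x0 \<le> Q (opL u x) + lam * l1_norm x"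
  shows "\<exists>c. subgrad Q (opL u x0) c \<and> (\<forall>x. in_l1 x \<longrightarrow> lam * l1_norm x0 + c \<bullet> opL u x0 \<le> lam * l1_norm x + c \<bullet> opL u x)"
proof -
  define y0 where "y0 = opL u x0"
  define A :: "((real^'m) \<times> real) set" where "A = {(z, r). r > Q z - Q y0}"
  define B :: "((real^'m) \<times> real) set" where "B = {(opL u x, s) | x s. in_l1 x \<and> s \<le> lam * l1_norm x0 - lam * l1_norm x}"
  have cA: "convex A"
  proof (rule convexI)
    fix p q :: "(real^'m) \<times> real" and a b :: real
    assume p: "p \<in> A" and q: "q \<in> A" and a: "0 \<le> a" and b: "0 \<le> b" and ab: "a + b = 1"
    obtain z1 r1 where p': "p = (z1, r1)" "r1 > Q z1 - Q y0" using p unfolding A_def by auto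
    obtain z2 r2 where q': "q = (z2, r2)" "r2 > Q z2 - Q y0" using q unfolding A_def by auto
    have "Q ((1 - b) *\<^sub>R z1 + b *\<^sub>R z2) \<le> (1 - b) * Q z1 + b * Q z2"
      using convex_onD[OF cv] b ab a by simp
    moreover have "a = 1 - b" using ab by simp
    ultimately have Qc: "Q (a *\<^sub>R z1 + b *\<^sub>R z2) \<le> a * Q z1 + b * Q z2" by simp
    have "a * (r1 - (Q z1 - Q y0)) + b * (r2 - (Q z2 - Q y0)) > 0"
    proof (cases "a > 0")
      case True
      then have "a * (r1 - (Q z1 - Q y0)) > 0" using p' by simp
      moreover have "b * (r2 - (Q z2 - Q y0)) \<ge> 0" using q' b by simp
      ultimately show ?thesis by simp
    next
      case False
      then have "b = 1" "a = 0" using a ab by auto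
      then show ?thesis using q' by simp
    qed
    then have "a * r1 + b * r2 > Q (a *\<^sub>R z1 + b *\<^sub>R z2) - Q y0" using Qc
    proof -
      have "a * Q y0 + b * Q y0 = (a + b) * Q y0" by (simp add: algebra_simps)
      then have "a * Q y0 + b * Q y0 = Q y0" using ab by simp
      then show ?thesis using \<open>a * (r1 - (Q z1 - Q y0)) + b * (r2 - (Q z2 - Q y0)) > 0\<close> Qc
        by (simp add: algebra_simps)
    qed
    then show "a *\<^sub>R p + b *\<^sub>R q \<in> A" unfolding A_def using p' q' by simp
  qed
  have cB: "convex B"
  proof (rule convexI)
    fix p q :: "(real^'m) \<times> real" and a b :: real
    assume p: "p \<in> B" and q: "q \<in> B" and a: "0 \<le> a" and b: "0 \<le> b" and ab: "a + b = 1"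
    obtain x1 s1 where p': "p = (opL u x1, s1)" "in_l1 x1" "s1 \<le> lam * l1_norm x0 - lam * l1_norm x1" using p unfolding B_def by auto
    obtain x2 s2 where q': "q = (opL u x2, s2)" "in_l1 x2" "s2 \<le> lam * l1_norm x0 - lam * l1_norm x2" using q unfolding B_def by auto
    define xc where "xc = (\<lambda>j. a * x1 j + b * x2 j)"
    have l: "in_l1 xc" "l1_norm xc \<le> a * l1_norm x1 + b * l1_norm x2"
      using l1_comb[OF p'(2) q'(2) a b] unfolding xc_def by auto
    have o: "opL u xc = a *\<^sub>R opL u x1 + b *\<^sub>R opL u x2" unfolding xc_def by (rule opL_comb[OF u p'(2) q'(2)])
    have "a * s1 + b * s2 \<le> a * (lam * l1_norm x0 - lam * l1_norm x1) + b * (lam * l1_norm x0 - lam * l1_norm x2)"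
      using p'(3) q'(3) a b by (intro add_mono mult_left_mono) auto
    also have "\<dots> = lam * l1_norm x0 - lam * (a * l1_norm x1 + b * l1_norm x2)" using ab by (simp add: algebra_simps distrib_right[symmetric])
    also have "\<dots> \<le> lam * l1_norm x0 - lam * l1_norm xc" using l(2) lam by simp
    finally have "a * s1 + b * s2 \<le> lam * l1_norm x0 - lam * l1_norm xc" .
    then show "a *\<^sub>R p + b *\<^sub>R q \<in> B" unfolding B_def using p' q' l(1) o[symmetric] by auto
  qed
  have y0A: "(y0, t) \<in> A" if "t > 0" for t using that unfolding A_def by simp
  have x0B: "(y0, 0) \<in> B" unfolding B_def y0_def using x0 by auto
  have disj: "A \<inter> B = {}"
  proof (rule ccontr)
    assume "A \<inter> B \<noteq> {}"
    then obtain x s where "in_l1 x" "s \<le> lam * l1_norm x0 - lam * l1_norm x" "s > Q (opL u x) - Q y0"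
      unfolding A_def B_def by auto
    moreover have "Q (opL u x0) + lam * l1_norm x0 \<le> Q (opL u x) + lam * l1_norm x"
      using mn \<open>in_l1 x\<close> by blast
    ultimately show False unfolding y0_def by linarith
  qed
  have An: "A \<noteq> {}" using y0A[of 1] by auto
  have Bn: "B \<noteq> {}" using x0B by auto
  obtain ab b where ab0: "ab \<noteq> 0" and SA: "\<forall>p\<in>A. ab \<bullet> p \<le> b" and SB: "\<forall>p\<in>B. ab \<bullet> p \<ge> b"
    using separating_hyperplane_sets[OF cA cB An Bn disj] by blast
  obtain d \<tau> where abd: "ab = (d, \<tau>)" by (cases ab)
  have Aineq: "d \<bullet> z + \<tau> * r \<le> b" if "r > Q z - Q y0" for z r
    using SA that unfolding A_def abd by auto
  have Bineq: "d \<bullet> opL u x + \<tau> * s \<ge> b" if "in_l1 x" "s \<le> lam * l1_norm x0 - lam * l1_norm x" for x s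
    using SB that unfolding B_def abd by auto
  have by0: "d \<bullet> y0 \<ge> b" using Bineq[OF x0, of 0] by (simp add: y0_def)
  have tle: "\<tau> \<le> 0" using Aineq[of y0 1] by0 by simp
  define \<sigma> where "\<sigma> = - \<tau>"
  have s0: "\<sigma> \<ge> 0" using tle by (simp add: \<sigma>_def)
  have dyb: "d \<bullet> y0 = b"
  proof -
    have "d \<bullet> y0 \<le> b + e" if "e > 0" for e
    proof -
      have "d \<bullet> y0 + \<tau> * (e / (\<sigma> + 1)) \<le> b" using Aineq[of y0 "e / (\<sigma> + 1)"] that s0 by simp
      moreover have "\<sigma> * (e / (\<sigma> + 1)) \<le> e" using s0 that by (simp add: field_simps)
      ultimately show ?thesis by (simp add: \<sigma>_def)
    qed
    then have "d \<bullet> y0 \<le> b" by (rule field_le_epsilon)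
    then show ?thesis using by0 by simp
  qed
  have spos: "\<sigma> > 0"
  proof (rule ccontr)
    assume "\<not> \<sigma> > 0"
    then have t0: "\<tau> = 0" using s0 by (simp add: \<sigma>_def)
    then have d0: "d \<noteq> 0" using ab0 abd by (auto simp: zero_prod_def)
    have "d \<bullet> (y0 + d) \<le> b" using Aineq[of "y0 + d" "Q (y0 + d) - Q y0 + 1"] t0 by simp
    then have "d \<bullet> d \<le> 0" using dyb by (simp add: inner_add_right)
    moreover have "0 < d \<bullet> d" using d0 by simp
    ultimately show False by linarith
  qed
  define c where "c = (1 / \<sigma>) *\<^sub>R d"
  have sg: "subgrad Q y0 c"
    unfolding subgrad_def
  proof
    fix z
    have "d \<bullet> (z - y0) \<le> \<sigma> * (Q z - Q y0) + e" if "e > 0" for e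
    proof -
      have "d \<bullet> z + \<tau> * (Q z - Q y0 + e / \<sigma>) \<le> b" using Aineq[of z "Q z - Q y0 + e / \<sigma>"] that spos by simp
      then show ?thesis using dyb spos by (simp add: \<sigma>_def inner_diff_right field_simps)
    qed
    then have "d \<bullet> (z - y0) \<le> \<sigma> * (Q z - Q y0)" by (rule field_le_epsilon)
    then have "(1 / \<sigma>) * (d \<bullet> (z - y0)) \<le> Q z - Q y0" using spos by (simp add: field_simps)
    then show "Q y0 + c \<bullet> (z - y0) \<le> Q z" unfolding c_def by simp
  qed
  have ineq: "lam * l1_norm x0 + c \<bullet> y0 \<le> lam * l1_norm x + c \<bullet> opL u x" if x: "in_l1 x" for x
  proof -
    have "d \<bullet> opL u x + \<tau> * (lam * l1_norm x0 - lam * l1_norm x) \<ge> b" using Bineq[OF x] by simp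
    then have "d \<bullet> y0 + \<sigma> * (lam * l1_norm x0) \<le> d \<bullet> opL u x + \<sigma> * (lam * l1_norm x)"
      using dyb by (simp add: \<sigma>_def algebra_simps)
    then have "(1 / \<sigma>) * (d \<bullet> y0 + \<sigma> * (lam * l1_norm x0)) \<le> (1 / \<sigma>) * (d \<bullet> opL u x + \<sigma> * (lam * l1_norm x))"
      using spos by (intro mult_left_mono) auto
    then show ?thesis using spos unfolding c_def by (simp add: distrib_left algebra_simps)
  qed
  show ?thesis using sg ineq unfolding y0_def by blast
qed


theorem mainTheorem20:
  fixes u :: "'m::finite \<Rightarrow> nat \<Rightarrow> real"
    and Q :: "real^'m \<Rightarrow> real"
    and lam :: real
    and x0 :: "nat \<Rightarrow> real"
  assumes u_c0: "\<And>i. in_c0 (u i)"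
    and Q_convex: "convex_on UNIV Q"
    and Q_nonneg: "\<And>a. Q a \<ge> 0"
    and lam_pos: "lam > 0"
    and x0_l1: "in_l1 x0"
  shows "(\<forall>x. in_l1 x \<longrightarrow>
             Q (opL u x0) + lam * l1_norm x0 \<le> Q (opL u x) + lam * l1_norm x)
         \<longleftrightarrow>
         (\<exists>c. c = prox (conj_fun Q) (c + opL u x0) \<and>
              x0 = prox_l1 (\<lambda>j. x0 j - (1 / lam) * trunc_S (opL_adj u c) j))"
proof -
  have E: "(\<forall>x. in_l1 x \<longrightarrow> lam * l1_norm x0 + c \<bullet> opL u x0 \<le> lam * l1_norm x + c \<bullet> opL u x)
     \<longleftrightarrow> x0 = prox_l1 (\<lambda>j. x0 j - (1 / lam) * trunc_S (opL_adj u c) j)" for c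
  proof -
    have "(\<forall>x. in_l1 x \<longrightarrow> lam * l1_norm x0 + c \<bullet> opL u x0 \<le> lam * l1_norm x + c \<bullet> opL u x)
      \<longleftrightarrow> (\<forall>x. in_l1 x \<longrightarrow> lam * l1_norm x0 + seq_inner (opL_adj u c) x0 \<le> lam * l1_norm x + seq_inner (opL_adj u c) x)"
    proof -
      have AI: "\<And>x. in_l1 x \<Longrightarrow> c \<bullet> opL u x = seq_inner (opL_adj u c) x"
        using adj_inner[where u=u] u_c0 by blast
      show ?thesis using AI[OF x0_l1] AI by auto
    qed
    also have "\<dots> \<longleftrightarrow> (\<forall>j. \<bar>opL_adj u c j\<bar> \<le> lam \<and> (x0 j \<noteq> 0 \<longrightarrow> opL_adj u c j = - lam * sgn (x0 j)))"
      by (rule ineq_iff_P[OF adj_c0[OF u_c0] x0_l1 lam_pos])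
    also have "\<dots> \<longleftrightarrow> x0 = prox_l1 (\<lambda>j. x0 j - (1 / lam) * trunc_S (opL_adj u c) j)"
      by (rule trunc_char[OF adj_c0[OF u_c0] lam_pos, symmetric])
    finally show ?thesis .
  qed
  have PS: "c = prox (conj_fun Q) (c + opL u x0) \<longleftrightarrow> subgrad Q (opL u x0) c" for c
    by (rule prox_iff_subgrad[OF Q_convex Q_nonneg])
  show ?thesis
  proof
    assume mn: "\<forall>x. in_l1 x \<longrightarrow> Q (opL u x0) + lam * l1_norm x0 \<le> Q (opL u x) + lam * l1_norm x"
    obtain c where c: "subgrad Q (opL u x0) c"
      "\<forall>x. in_l1 x \<longrightarrow> lam * l1_norm x0 + c \<bullet> opL u x0 \<le> lam * l1_norm x + c \<bullet> opL u x"
      using necessity[OF u_c0 Q_convex lam_pos x0_l1 mn] by blast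
    show "\<exists>c. c = prox (conj_fun Q) (c + opL u x0) \<and>
              x0 = prox_l1 (\<lambda>j. x0 j - (1 / lam) * trunc_S (opL_adj u c) j)"
      using c E PS by blast
  next
    assume "\<exists>c. c = prox (conj_fun Q) (c + opL u x0) \<and>
              x0 = prox_l1 (\<lambda>j. x0 j - (1 / lam) * trunc_S (opL_adj u c) j)"
    then obtain c where sg: "subgrad Q (opL u x0) c"
      and iq: "\<forall>x. in_l1 x \<longrightarrow> lam * l1_norm x0 + c \<bullet> opL u x0 \<le> lam * l1_norm x + c \<bullet> opL u x"
      using E PS by blast
    show "\<forall>x. in_l1 x \<longrightarrow> Q (opL u x0) + lam * l1_norm x0 \<le> Q (opL u x) + lam * l1_norm x"
    proof (intro allI impI)
      fix x assume x: "in_l1 x"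
      have "Q (opL u x) \<ge> Q (opL u x0) + c \<bullet> (opL u x - opL u x0)" using sg unfolding subgrad_def by blast
      then have "Q (opL u x) \<ge> Q (opL u x0) + c \<bullet> opL u x - c \<bullet> opL u x0" by (simp add: inner_diff_right)
      moreover have "lam * l1_norm x0 + c \<bullet> opL u x0 \<le> lam * l1_norm x + c \<bullet> opL u x" using iq x by blast
      ultimately show "Q (opL u x0) + lam * l1_norm x0 \<le> Q (opL u x) + lam * l1_norm x" by linarith
    qed
  qed
qed

end
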